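(* Let $n,m\ge 1$ and $V(n,m)=\{1,\dots,n\}\times\{1,\dots,m\}$. The minimum number of segments of a geometric tree (whether or not it is required to be noncrossing) covering $V(n,m)$ is $\min(n,m)$ if $n=1$ or $m=1$ or $n=m=2$, and $\min(n,m)+1$ otherwise.
   Context: A geometric tree is a finite abstract tree with at least one edge whose vertices are distinct points of the plane and whose edges are drawn as closed straight-line segments between their endpoints; it covers $P$ if $P$ is contained in the union of its edges; it is noncrossing if any two edges intersect only in a common endpoint. The number of segments of a geometric tree is the minimum number of closed straight-line segments whose union equals the union of the edges of the tree. *)

theory Defs
  imports "HOL-Analysis.Analysis"
begin

type_synonym point = "real \<times> real"

text \<open>An abstract graph on a vertex set V of plane points, with edges as
  2-element vertex sets.\<close>

definition adj :: "point set set \<Rightarrow> point \<Rightarrow> point \<Rightarrow> bool" where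
  "adj E a b \<longleftrightarrow> {a, b} \<in> E"

definition is_cycle :: "point set set \<Rightarrow> point list \<Rightarrow> bool" where
  "is_cycle E vs \<longleftrightarrow> length vs \<ge> 3 \<and> distinct vs
     \<and> (\<forall>i. Suc i < length vs \<longrightarrow> adj E (vs ! i) (vs ! Suc i))
     \<and> adj E (last vs) (hd vs)"

definition connected_graph :: "point set \<Rightarrow> point set set \<Rightarrow> bool" where
  "connected_graph V E \<longleftrightarrow>
     (\<forall>a\<in>V. \<forall>b\<in>V. (a, b) \<in> {(x, y). adj E x y}\<^sup>*)"

definition geom_tree :: "point set \<Rightarrow> point set set \<Rightarrow> bool" where
  "geom_tree V E \<longleftrightarrow> finite V \<and> E \<noteq> {}
     \<and> (\<forall>e\<in>E. \<exists>a b. a \<noteq> b \<and> a \<in> V \<and> b \<in> V \<and> e = {a, b})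
     \<and> connected_graph V E
     \<and> (\<nexists>vs. set vs \<subseteq> V \<and> is_cycle E vs)"

definition edge_seg :: "point set \<Rightarrow> point set" where
  "edge_seg e = (\<Union>a\<in>e. \<Union>b\<in>e. closed_segment a b)"

definition tree_union :: "point set set \<Rightarrow> point set" where
  "tree_union E = (\<Union>e\<in>E. edge_seg e)"

definition covers :: "point set set \<Rightarrow> point set \<Rightarrow> bool" where
  "covers E P \<longleftrightarrow> P \<subseteq> tree_union E"

definition noncrossing :: "point set set \<Rightarrow> bool" where
  "noncrossing E \<longleftrightarrow> (\<forall>e\<in>E. \<forall>f\<in>E. e \<noteq> f \<longrightarrow> edge_seg e \<inter> edge_seg f \<subseteq> e \<inter> f)"

definition num_segments :: "point set set \<Rightarrow> nat" where
  "num_segments E = (LEAST k. \<exists>s :: nat \<Rightarrow> point \<times> point.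
      (\<Union>i<k. closed_segment (fst (s i)) (snd (s i))) = tree_union E)"

definition grid :: "nat \<Rightarrow> nat \<Rightarrow> point set" where
  "grid n m = {(real i, real j) | i j. 1 \<le> i \<and> i \<le> n \<and> 1 \<le> j \<and> j \<le> m}"

definition grid_value :: "nat \<Rightarrow> nat \<Rightarrow> nat" where
  "grid_value n m = (if n = 1 \<or> m = 1 \<or> (n = 2 \<and> m = 2) then min n m else min n m + 1)"

end

theory Submission
  imports Defs
begin

lemma seg_in:
  fixes a b p :: point
  assumes "p \<in> closed_segment a b"
  shows "\<exists>u. 0 \<le> u \<and> u \<le> 1 \<and> fst p = (1-u)* fst a + u* fst b \<and> snd p = (1-u)* snd a + u* snd b"
  using assms unfolding closed_segment_def by auto

lemma seg_hor:
  fixes a b p :: point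
  assumes "snd a = snd b" "p \<in> closed_segment a b"
  shows "snd p = snd a"
proof -
  obtain u where "snd p = (1-u)* snd a + u* snd b" using seg_in[OF assms(2)] by blast
  thus ?thesis using assms(1) by (simp add: algebra_simps)
qed

lemma seg_nonhor:
  fixes a b p :: point
  assumes "snd a \<noteq> snd b" "p \<in> closed_segment a b"
  shows "fst p = fst a + (snd p - snd a) * ((fst b - fst a)/(snd b - snd a))"
proof -
  obtain u where u: "fst p = (1-u)* fst a + u* fst b" "snd p = (1-u)* snd a + u* snd b"
    using seg_in[OF assms(2)] by blast
  have d: "snd b - snd a \<noteq> 0" using assms(1) by simp
  have h: "snd p - snd a = u * (snd b - snd a)" using u by (simp add: algebra_simps)
  have "(snd p - snd a) * ((fst b - fst a)/(snd b - snd a)) = u*((snd b - snd a)*((fst b - fst a)/(snd b - snd a)))"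
    by (simp add: h)
  also have "\<dots> = u * (fst b - fst a)" using d by simp
  finally have e: "(snd p - snd a) * ((fst b - fst a)/(snd b - snd a)) = u * (fst b - fst a)" .
  have "fst p = fst a + u * (fst b - fst a)" using u by (simp add: algebra_simps)
  thus ?thesis using e by simp
qed

lemma seg_nonhor_unique:
  fixes a b p q :: point
  assumes "snd a \<noteq> snd b" "p \<in> closed_segment a b" "q \<in> closed_segment a b" "snd p = snd q"
  shows "p = q"
  using seg_nonhor[OF assms(1,2)] seg_nonhor[OF assms(1,3)] assms(4) by (simp add: prod_eq_iff)

lemma edge_seg_pair: "edge_seg {a, b} = closed_segment a b"
proof -
  have "closed_segment a a \<subseteq> closed_segment a b" "closed_segment b b \<subseteq> closed_segment a b"
    using ends_in_segment[of a b] by auto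
  moreover have "edge_seg {a, b} = closed_segment a a \<union> closed_segment a b \<union> closed_segment b a \<union> closed_segment b b"
    unfolding edge_seg_def by auto
  ultimately show ?thesis using closed_segment_commute[of a b] by blast
qed

lemma disc:
  fixes S :: "nat \<Rightarrow> point set"
  assumes "i0 < k" "i1 < k" "i1 \<noteq> i0" "\<And>i. i < k \<Longrightarrow> S i \<noteq> {} \<and> closed (S i)"
    "S i0 \<subseteq> {p. P p}" "\<And>i. i < k \<Longrightarrow> i \<noteq> i0 \<Longrightarrow> S i \<subseteq> {p. \<not> P p}"
  shows "\<not> connected (\<Union>i<k. S i)"
proof -
  let ?Y = "\<Union>i\<in>{..<k}-{i0}. S i"
  have c1: "closed (S i0)" using assms by auto
  have c2: "closed ?Y" using assms(4) by (intro closed_UN) auto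
  have u: "(\<Union>i<k. S i) \<subseteq> S i0 \<union> ?Y" by auto
  have dj: "S i0 \<inter> ?Y = {}" using assms(5,6) by fastforce
  have n1: "S i0 \<inter> (\<Union>i<k. S i) \<noteq> {}" using assms(1,4) by blast
  have n2: "?Y \<inter> (\<Union>i<k. S i) \<noteq> {}" using assms(2,3,4) by blast
  show ?thesis unfolding connected_closed using c1 c2 u dj n1 n2 by blast
qed


definition sg :: "(nat \<Rightarrow> point \<times> point) \<Rightarrow> nat \<Rightarrow> point set" where
  "sg s i = closed_segment (fst (s i)) (snd (s i))"

definition hor :: "(nat \<Rightarrow> point \<times> point) \<Rightarrow> nat \<Rightarrow> bool" where
  "hor s i \<longleftrightarrow> snd (fst (s i)) = snd (snd (s i))"

lemma grid_mem: "1 \<le> i \<Longrightarrow> i \<le> n \<Longrightarrow> 1 \<le> j \<Longrightarrow> j \<le> m \<Longrightarrow> (real i, real j) \<in> grid n m"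
  unfolding grid_def by blast

lemma full_row_inj:
  assumes nf: "\<forall>i<k. hor s i \<longrightarrow> snd (fst (s i)) \<noteq> real j"
    and "i < k" "(x, real j) \<in> sg s i" "(y, real j) \<in> sg s i"
  shows "x = y"
proof -
  have nh: "\<not> hor s i"
  proof
    assume "hor s i"
    hence "snd (x, real j) = snd (fst (s i))" using seg_hor assms(3) unfolding hor_def sg_def by blast
    thus False using nf assms(2) \<open>hor s i\<close> by auto
  qed
  show ?thesis using seg_nonhor_unique[of "fst (s i)" "snd (s i)" "(x, real j)" "(y, real j)"] nh assms(3,4)
    unfolding hor_def sg_def by auto
qed

lemma full_row:
  assumes cov: "grid n m \<subseteq> (\<Union>i<k. sg s i)" and j: "1 \<le> j" "j \<le> m"
    and nf: "\<forall>i<k. hor s i \<longrightarrow> snd (fst (s i)) \<noteq> real j"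
  shows "n \<le> k \<and> (k = n \<longrightarrow> (\<forall>i<k. \<exists>c\<in>{1..n}. (real c, real j) \<in> sg s i))"
proof -
  have "\<forall>c\<in>{1..n}. \<exists>i. i < k \<and> (real c, real j) \<in> sg s i"
  proof
    fix c assume "c \<in> {1..n}"
    hence "(real c, real j) \<in> grid n m" using grid_mem j by auto
    thus "\<exists>i. i < k \<and> (real c, real j) \<in> sg s i" using cov by auto
  qed
  then obtain \<sigma> where \<sigma>: "\<And>c. c \<in> {1..n} \<Longrightarrow> \<sigma> c < k \<and> (real c, real j) \<in> sg s (\<sigma> c)"
    by metis
  have inj: "inj_on \<sigma> {1..n}"
  proof (rule inj_onI)
    fix c c' assume "c \<in> {1..n}" "c' \<in> {1..n}" "\<sigma> c = \<sigma> c'"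
    hence "real c = real c'" using full_row_inj[OF nf, of "\<sigma> c" "real c" "real c'"] \<sigma> by metis
    thus "c = c'" by simp
  qed
  have sub: "\<sigma> ` {1..n} \<subseteq> {..<k}" using \<sigma> by auto
  have cn: "card (\<sigma> ` {1..n}) = n" using card_image[OF inj] by simp
  have 1: "n \<le> k" using card_mono[OF _ sub] cn by simp
  have 2: "\<forall>i<k. \<exists>c\<in>{1..n}. (real c, real j) \<in> sg s i" if "k = n"
  proof -
    have "\<sigma> ` {1..n} = {..<k}" using card_subset_eq[OF _ sub] cn that by simp
    thus ?thesis using \<sigma> by (metis imageE lessThan_iff)
  qed
  show ?thesis using 1 2 by blast
qed

lemma claimA:
  assumes cov: "grid n m \<subseteq> (\<Union>i<k. sg s i)" and "m \<ge> 1"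
  shows "min n m \<le> k"
proof (rule ccontr)
  assume "\<not> min n m \<le> k"
  hence kn: "k < n" and km: "k < m" by auto
  let ?R = "(\<lambda>i. snd (fst (s i))) ` {i. i < k \<and> hor s i}"
  have "\<exists>j\<in>{1..m}. real j \<notin> ?R"
  proof (rule ccontr)
    assume "\<not> ?thesis"
    hence "real ` {1..m} \<subseteq> ?R" by auto
    hence "card (real ` {1..m}) \<le> card ?R" by (intro card_mono) auto
    also have "\<dots> \<le> card {i. i < k \<and> hor s i}" by (rule card_image_le) auto
    also have "\<dots> \<le> card {..<k}" by (intro card_mono) auto
    finally have "m \<le> k" by (simp add: card_image inj_on_def)
    thus False using km by simp
  qed
  then obtain j where j: "1 \<le> j" "j \<le> m" "real j \<notin> ?R" by auto
  have "\<forall>i<k. hor s i \<longrightarrow> snd (fst (s i)) \<noteq> real j"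
    using j(3) by (metis (mono_tags, lifting) image_eqI mem_Collect_eq)
  hence "n \<le> k" using full_row[OF cov j(1,2)] by blast
  thus False using kn by simp
qed


lemma mul_ge1: "(a::int) \<ge> 0 \<Longrightarrow> d \<ge> 1 \<Longrightarrow> a * d \<ge> a"
  using mult_nonneg_nonneg[of a "d-1"] by (simp add: algebra_simps)
lemma mul_le1: "(a::int) \<ge> 0 \<Longrightarrow> d \<le> -1 \<Longrightarrow> a * d \<le> -a"
  using mult_nonneg_nonneg[of a "-d-1"] by (simp add: algebra_simps)
lemma mul_ge2: "(a::int) \<ge> 0 \<Longrightarrow> d \<ge> 2 \<Longrightarrow> a * d \<ge> 2*a"
  using mult_nonneg_nonneg[of a "d-2"] by (simp add: algebra_simps)
lemma mul_le2: "(a::int) \<ge> 0 \<Longrightarrow> d \<le> -2 \<Longrightarrow> a * d \<le> -2*a"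
  using mult_nonneg_nonneg[of a "-d-2"] by (simp add: algebra_simps)

lemma int_case:
  fixes C :: "nat \<Rightarrow> nat \<Rightarrow> nat" and n :: nat
  assumes n3: "n \<ge> 3"
    and rng: "\<And>i j. i < n \<Longrightarrow> j \<in> {1..n} \<Longrightarrow> C i j \<in> {1..n}"
    and lin: "\<And>i j. i < n \<Longrightarrow> j \<in> {1..n} \<Longrightarrow>
       int (C i j) = int (C i 1) + (int j - 1) * (int (C i 2) - int (C i 1))"
    and inj2: "\<And>i i'. i < n \<Longrightarrow> i' < n \<Longrightarrow> C i 2 = C i' 2 \<Longrightarrow> i = i'"
    and surj1: "\<And>c. c \<in> {1..n} \<Longrightarrow> \<exists>i<n. C i 1 = c"
  shows "\<And>i. i < n \<Longrightarrow> C i 2 = C i 1"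
proof -
  have mid: "C i 2 = C i 1" if i: "i < n" and c: "2 \<le> C i 1" "C i 1 \<le> n - 1" for i
  proof -
    define d where "d = int (C i 2) - int (C i 1)"
    have e: "int (C i n) = int (C i 1) + (int n - 1) * d" using lin[OF i, of n] n3 d_def by simp
    have r: "C i n \<in> {1..n}" using rng[OF i, of n] n3 by simp
    have a0: "int n - 1 \<ge> 0" using n3 by simp
    have "d = 0"
    proof (rule ccontr)
      assume "d \<noteq> 0"
      hence "d \<ge> 1 \<or> d \<le> -1" by auto
      thus False
      proof
        assume "d \<ge> 1" thus False using mul_ge1[OF a0] e r c by force
      next
        assume "d \<le> -1" thus False using mul_le1[OF a0] e r c by force
      qed
    qed
    thus ?thesis using d_def by simp
  qed
  fix i assume i: "i < n"
  have r1: "C i 1 \<in> {1..n}" "C i 2 \<in> {1..n}" using rng[OF i] n3 by auto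
  have a0: "int n - 1 \<ge> 0" using n3 by simp
  define d where "d = int (C i 2) - int (C i 1)"
  have e: "int (C i n) = int (C i 1) + (int n - 1) * d" using lin[OF i, of n] n3 d_def by simp
  have r: "C i n \<in> {1..n}" using rng[OF i, of n] n3 by simp
  consider "C i 1 = 1" | "2 \<le> C i 1 \<and> C i 1 \<le> n - 1" | "C i 1 = n" using r1 by fastforce
  thus "C i 2 = C i 1"
  proof cases
    case 1
    have "d \<ge> 0" using r1 1 d_def by simp
    moreover have "d < 2" using mul_ge2[OF a0, of d] e r 1 n3 by force
    moreover have "d \<noteq> 1"
    proof
      assume "d = 1"
      hence c2: "C i 2 = 2" using 1 d_def by simp
      obtain i' where i': "i' < n" "C i' 1 = 2" using surj1[of 2] n3 by auto
      have "C i' 2 = 2" using mid[OF i'(1)] i'(2) n3 by simp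
      hence "i = i'" using inj2[OF i i'(1)] c2 by simp
      thus False using 1 i'(2) by simp
    qed
    ultimately have "d = 0" by simp
    thus ?thesis using d_def by simp
  next
    case 2 thus ?thesis using mid[OF i] by simp
  next
    case 3
    have "d \<le> 0" using r1 3 d_def by simp
    moreover have "d > -2" using mul_le2[OF a0, of d] e r 3 n3 by force
    moreover have "d \<noteq> -1"
    proof
      assume "d = -1"
      hence c2: "C i 2 = n - 1" using 3 d_def by simp
      obtain i' where i': "i' < n" "C i' 1 = n - 1" proof -
        have "n - 1 \<in> {1..n}" using n3 by simp
        thus ?thesis using surj1 that by blast
      qed
      have "C i' 2 = n - 1" using mid[OF i'(1)] i'(2) n3 by simp
      hence "i = i'" using inj2[OF i i'(1)] c2 by simp
      thus False using 3 i'(2) n3 by simp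
    qed
    ultimately have "d = 0" by simp
    thus ?thesis using d_def by simp
  qed
qed


lemma sg_ne_closed: "sg s i \<noteq> {} \<and> closed (sg s i)"
  unfolding sg_def using ends_in_segment(1) by auto

lemma core:
  assumes cov: "grid n m \<subseteq> (\<Union>i<n. sg s i)" and conn: "connected (\<Union>i<n. sg s i)"
    and n2: "2 \<le> n" and nm: "n \<le> m" and ex: "\<not> (n = 2 \<and> m = 2)"
  shows False
proof (cases "\<exists>j\<in>{1..m}. \<forall>i<n. hor s i \<longrightarrow> snd (fst (s i)) \<noteq> real j")
  case False
  hence H: "\<forall>j\<in>{1..m}. \<exists>i<n. hor s i \<and> snd (fst (s i)) = real j" by auto
  hence H': "\<forall>j\<in>{1..m}. \<exists>i. i < n \<and> hor s i \<and> snd (fst (s i)) = real j" by blast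
  obtain \<tau> where \<tau>': "\<forall>j\<in>{1..m}. \<tau> j < n \<and> hor s (\<tau> j) \<and> snd (fst (s (\<tau> j))) = real j"
    using bchoice[OF H'] by blast
  have \<tau>: "\<And>j. j\<in>{1..m} \<Longrightarrow> \<tau> j < n \<and> hor s (\<tau> j) \<and> snd (fst (s (\<tau> j))) = real j"
    using \<tau>' by blast
  have inj: "inj_on \<tau> {1..m}"
  proof (rule inj_onI)
    fix j j' assume jj: "j \<in> {1..m}" "j' \<in> {1..m}" "\<tau> j = \<tau> j'"
    have "real j = snd (fst (s (\<tau> j)))" using \<tau>[OF jj(1)] by simp
    also have "\<dots> = snd (fst (s (\<tau> j')))" using jj(3) by simp
    also have "\<dots> = real j'" using \<tau>[OF jj(2)] by simp
    finally show "j = j'" by simp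
  qed
  have sub: "\<tau> ` {1..m} \<subseteq> {..<n}" using \<tau> by blast
  have "m \<le> n" using card_mono[OF _ sub] card_image[OF inj] by simp
  hence mn: "m = n" using nm by simp
  have im: "\<tau> ` {1..m} = {..<n}" using card_subset_eq[OF _ sub] card_image[OF inj] mn by simp
  have sgh: "sg s i \<subseteq> {p. snd p = real j}" if "j \<in> {1..m}" "i = \<tau> j" for i j
  proof
    fix p assume p: "p \<in> sg s i"
    have h: "snd (fst (s i)) = snd (snd (s i))" "snd (fst (s i)) = real j"
      using \<tau>[OF that(1)] that(2) unfolding hor_def by auto
    have "snd p = snd (fst (s i))" using seg_hor[OF h(1)] p unfolding sg_def by blast
    thus "p \<in> {p. snd p = real j}" using h(2) by simp
  qed
  have one: "1 \<in> {1..m}" using nm n2 by simp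
  define i0 where "i0 = \<tau> 1"
  have i0: "i0 < n" using \<tau>[OF one] i0_def by simp
  define i1 where "i1 = (if i0 = 0 then 1 else (0::nat))"
  have i1: "i1 < n" "i1 \<noteq> i0" using n2 by (auto simp: i1_def)
  have p1: "sg s i0 \<subseteq> {p. snd p = 1}" using sgh[OF one i0_def] by simp
  have p2: "sg s i \<subseteq> {p. \<not> snd p = 1}" if "i < n" "i \<noteq> i0" for i
    proof -
      have "i \<in> \<tau> ` {1..m}" using im that(1) by simp
      then obtain j where j: "j \<in> {1..m}" "i = \<tau> j" by blast
      have "j \<noteq> 1"
      proof
        assume "j = 1" hence "i = i0" using j(2) i0_def by simp
        thus False using that(2) by simp
      qed
      hence rj: "real j \<noteq> 1" by simp
      show ?thesis
      proof
        fix p assume "p \<in> sg s i"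
        hence "snd p = real j" using sgh[OF j] by blast
        thus "p \<in> {p. \<not> snd p = 1}" using rj by simp
      qed
    qed
  have "\<not> connected (\<Union>i<n. sg s i)"
    by (rule disc[of i0 n i1 "sg s" "\<lambda>p. snd p = 1", OF i0 i1 sg_ne_closed p1 p2])
  thus False using conn by simp
next
  case True
  then obtain j0 where j0: "j0 \<in> {1..m}" "\<forall>i<n. hor s i \<longrightarrow> snd (fst (s i)) \<noteq> real j0" by blast
  have r0: "\<forall>i<n. \<exists>c\<in>{1..n}. (real c, real j0) \<in> sg s i" using full_row[OF cov, of j0] j0 by auto
  have nh: "\<not> hor s i" if "i < n" for i
  proof
    assume h: "hor s i"
    obtain c where "(real c, real j0) \<in> sg s i" using r0 \<open>i < n\<close> by blast
    hence "snd (real c, real j0) = snd (fst (s i))" using seg_hor h unfolding hor_def sg_def by blast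
    thus False using j0(2) \<open>i < n\<close> h by auto
  qed
  have nf: "\<forall>i<n. hor s i \<longrightarrow> snd (fst (s i)) \<noteq> real j" for j using nh by auto
  have rows: "\<forall>i<n. \<exists>c\<in>{1..n}. (real c, real j) \<in> sg s i" if "j\<in>{1..m}" for j
    using full_row[OF cov, of j] that nf by auto
  have rows': "\<forall>ij\<in>{..<n}\<times>{1..m}. \<exists>c. c \<in> {1..n} \<and> (real c, real (snd ij)) \<in> sg s (fst ij)"
  proof
    fix ij assume "ij \<in> {..<n}\<times>{1..m}"
    hence "fst ij < n" "snd ij \<in> {1..m}" by auto
    thus "\<exists>c. c \<in> {1..n} \<and> (real c, real (snd ij)) \<in> sg s (fst ij)" using rows by blast
  qed
  obtain f where f: "\<forall>ij\<in>{..<n}\<times>{1..m}. f ij \<in> {1..n} \<and> (real (f ij), real (snd ij)) \<in> sg s (fst ij)"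
    using bchoice[OF rows'] by blast
  define C where "C i j = f (i, j)" for i j
  have C: "\<And>i j. i<n \<Longrightarrow> j\<in>{1..m} \<Longrightarrow> C i j \<in> {1..n} \<and> (real (C i j), real j) \<in> sg s i"
  proof -
    fix i j assume "i < n" "j \<in> {1..m}"
    hence "(i, j) \<in> {..<n}\<times>{1..m}" by simp
    thus "C i j \<in> {1..n} \<and> (real (C i j), real j) \<in> sg s i" using f unfolding C_def by fastforce
  qed
  have Cuniq: "C i j = c" if "i<n" "j\<in>{1..m}" "(real c, real j) \<in> sg s i" for i j c
  proof -
    have "real (C i j) = real c" using full_row_inj[OF nf that(1)] C[OF that(1,2)] that(3) by blast
    thus ?thesis by simp
  qed
  have Csurj: "(\<lambda>i. C i j) ` {..<n} = {1..n}" if j: "j\<in>{1..m}" for j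
  proof
    show "(\<lambda>i. C i j) ` {..<n} \<subseteq> {1..n}" using C j by auto
    show "{1..n} \<subseteq> (\<lambda>i. C i j) ` {..<n}"
    proof
      fix c assume c: "c \<in> {1..n}"
      hence "(real c, real j) \<in> grid n m" using grid_mem j by auto
      then obtain i where i: "i < n" "(real c, real j) \<in> sg s i" using cov by auto
      thus "c \<in> (\<lambda>i. C i j) ` {..<n}" using Cuniq[OF i(1) j i(2)] by auto
    qed
  qed
  have Cinj: "inj_on (\<lambda>i. C i j) {..<n}" if "j\<in>{1..m}" for j
  proof -
    have "card ((\<lambda>i. C i j) ` {..<n}) = card {..<n}" using Csurj[OF that] by simp
    thus ?thesis by (rule eq_card_imp_inj_on[OF finite_lessThan])
  qed
  define \<beta> where "\<beta> i = (fst (snd (s i)) - fst (fst (s i))) / (snd (snd (s i)) - snd (fst (s i)))" for i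
  have form: "fst p = fst (fst (s i)) + (snd p - snd (fst (s i))) * \<beta> i" if "i<n" "p \<in> sg s i" for i p
  proof -
    have nh': "snd (fst (s i)) \<noteq> snd (snd (s i))" using nh[OF that(1)] unfolding hor_def by simp
    have "fst p = fst (fst (s i)) + (snd p - snd (fst (s i))) * ((fst (snd (s i)) - fst (fst (s i))) / (snd (snd (s i)) - snd (fst (s i))))"
      using seg_nonhor[OF nh'] that(2) unfolding sg_def by blast
    thus ?thesis by (simp only: \<beta>_def)
  qed
  have one: "1 \<in> {1..m}" using nm n2 by simp
  have two: "2 \<in> {1..m}" using nm n2 by simp
  have lin_r: "real (C i j) = real (C i 1) + (real j - 1) * \<beta> i" if "i<n" "j\<in>{1..m}" for i j
  proof -
    have 1: "real (C i j) = fst (fst (s i)) + (real j - snd (fst (s i))) * \<beta> i"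
      using form[OF that(1), of "(real (C i j), real j)"] C[OF that] by simp
    have 2: "real (C i 1) = fst (fst (s i)) + (1 - snd (fst (s i))) * \<beta> i"
      using form[OF that(1), of "(real (C i 1), 1)"] C[OF that(1) one] by simp
    have 3: "(real j - snd (fst (s i))) * \<beta> i = (1 - snd (fst (s i))) * \<beta> i + (real j - 1) * \<beta> i"
      by (simp add: algebra_simps)
    show ?thesis using 1 2 3 by linarith
  qed
  have \<beta>2: "\<beta> i = real (C i 2) - real (C i 1)" if "i<n" for i using lin_r[OF that two] by simp
  have lin_i: "int (C i j) = int (C i 1) + (int j - 1) * (int (C i 2) - int (C i 1))" if "i<n" "j\<in>{1..m}" for i j
  proof -
    have "real (C i j) = real (C i 1) + (real j - 1) * (real (C i 2) - real (C i 1))"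
      using lin_r[OF that] \<beta>2[OF that(1)] by simp
    hence "real_of_int (int (C i j)) = real_of_int (int (C i 1) + (int j - 1) * (int (C i 2) - int (C i 1)))"
      using that(2) by simp
    thus ?thesis by (simp only: of_int_eq_iff)
  qed
  have D0: "C i 2 = C i 1" if i: "i<n" for i
  proof (cases "n < m")
    case True
    define d where "d = int (C i 2) - int (C i 1)"
    have mm: "m \<in> {1..m}" using nm n2 by simp
    have e: "int (C i m) = int (C i 1) + (int m - 1) * d" using lin_i[OF i mm] d_def by simp
    have r: "C i m \<in> {1..n}" "C i 1 \<in> {1..n}" using C[OF i mm] C[OF i one] by auto
    have ri: "1 \<le> int (C i m)" "int (C i m) \<le> int n" "1 \<le> int (C i 1)" "int (C i 1) \<le> int n"
      using r by auto
    have nmi: "int n < int m" using True by simp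
    have a0: "int m - 1 \<ge> 0" using nm n2 by simp
    have "d = 0"
    proof (rule ccontr)
      assume "d \<noteq> 0"
      hence "d \<ge> 1 \<or> d \<le> -1" by auto
      thus False
      proof
        assume "d \<ge> 1" thus False using mul_ge1[OF a0, of d] e ri nmi by linarith
      next
        assume "d \<le> -1" thus False using mul_le1[OF a0, of d] e ri nmi by linarith
      qed
    qed
    thus ?thesis using d_def by simp
  next
    case False
    hence mn: "m = n" and n3: "n \<ge> 3" using nm ex n2 by auto
    show ?thesis
    proof (rule int_case[OF n3 _ _ _ _ i])
      show "\<And>i j. i < n \<Longrightarrow> j \<in> {1..n} \<Longrightarrow> C i j \<in> {1..n}" using C mn by auto
      show "int (C i j) = int (C i 1) + (int j - 1) * (int (C i 2) - int (C i 1))"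
        if "i < n" "j \<in> {1..n}" for i j
        using lin_i[OF that(1)] that(2) mn by blast
      show "\<And>i i'. i < n \<Longrightarrow> i' < n \<Longrightarrow> C i 2 = C i' 2 \<Longrightarrow> i = i'"
        using Cinj[OF two] by (auto simp: inj_on_def)
      show "\<And>c. c \<in> {1..n} \<Longrightarrow> \<exists>i<n. C i 1 = c"
        using Csurj[OF one] by (metis imageE lessThan_iff)
    qed
  qed
  have vert: "sg s i \<subseteq> {p. fst p = real (C i 1)}" if i: "i<n" for i
  proof
    fix p assume p: "p \<in> sg s i"
    have b0: "\<beta> i = 0" using \<beta>2[OF i] D0[OF i] by simp
    have "real (C i 1) = fst (fst (s i))" using form[OF i, of "(real (C i 1), 1)"] C[OF i one] b0 by simp
    thus "p \<in> {p. fst p = real (C i 1)}" using form[OF i p] b0 by simp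
  qed
  have "1 \<in> (\<lambda>i. C i 1) ` {..<n}" using Csurj[OF one] n2 by simp
  then obtain i0 where i0: "i0 < n" "C i0 1 = 1" by auto
  define i1 where "i1 = (if i0 = 0 then 1 else (0::nat))"
  have i1: "i1 < n" "i1 \<noteq> i0" using n2 by (auto simp: i1_def)
  have p1: "sg s i0 \<subseteq> {p. fst p = 1}" using vert[OF i0(1)] i0(2) by simp
  have p2: "sg s i \<subseteq> {p. \<not> fst p = 1}" if "i < n" "i \<noteq> i0" for i
  proof -
    have "C i 1 \<noteq> C i0 1" using Cinj[OF one] that i0(1) unfolding inj_on_def by blast
    hence rj: "real (C i 1) \<noteq> 1" using i0(2) by simp
    show ?thesis
    proof
      fix p assume "p \<in> sg s i"
      hence "fst p = real (C i 1)" using vert[OF that(1)] by blast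
      thus "p \<in> {p. \<not> fst p = 1}" using rj by simp
    qed
  qed
  have "\<not> connected (\<Union>i<n. sg s i)"
    by (rule disc[of i0 n i1 "sg s" "\<lambda>p. fst p = 1", OF i0(1) i1 sg_ne_closed p1 p2])
  thus False using conn by simp
qed


definition swp :: "point \<Rightarrow> point" where "swp p = (snd p, fst p)"

lemma linear_swp: "linear swp"
proof -
  have "bounded_linear (\<lambda>p::point. (snd p, fst p))"
    by (intro bounded_linear_Pair bounded_linear_fst bounded_linear_snd)
  thus ?thesis unfolding swp_def by (rule bounded_linear.linear)
qed

lemma grid_swp: "grid m n \<subseteq> swp ` grid n m"
proof
  fix p assume "p \<in> grid m n"
  then obtain i j where "p = (real i, real j)" "1 \<le> i" "i \<le> m" "1 \<le> j" "j \<le> n"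
    unfolding grid_def by blast
  moreover hence "(real j, real i) \<in> grid n m" using grid_mem by blast
  ultimately show "p \<in> swp ` grid n m" unfolding swp_def by force
qed

lemma LB:
  assumes cov: "grid n m \<subseteq> (\<Union>i<k. sg s i)" and conn: "connected (\<Union>i<k. sg s i)"
    and n1: "n \<ge> 1" and m1: "m \<ge> 1"
  shows "grid_value n m \<le> k"
proof -
  have A: "min n m \<le> k" by (rule claimA[OF cov m1])
  show ?thesis
  proof (cases "n = 1 \<or> m = 1 \<or> (n = 2 \<and> m = 2)")
    case True thus ?thesis using A unfolding grid_value_def by simp
  next
    case False
    hence gv: "grid_value n m = min n m + 1" unfolding grid_value_def by simp
    have "k \<noteq> min n m"
    proof
      assume k: "k = min n m"
      show False
      proof (cases "n \<le> m")
        case True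
        hence "k = n" using k by simp
        thus False using core[of n m s] cov conn True False n1 m1 by auto
      next
        case nm: False
        hence km: "k = m" using k by simp
        define s' where "s' i = (swp (fst (s i)), swp (snd (s i)))" for i
        have sg': "sg s' i = swp ` sg s i" for i
          unfolding sg_def s'_def using closed_segment_linear_image[OF linear_swp] by simp
        have U: "(\<Union>i<k. sg s' i) = swp ` (\<Union>i<k. sg s i)" unfolding sg' by (simp add: image_UN)
        have cov': "grid m n \<subseteq> (\<Union>i<m. sg s' i)"
          using grid_swp[of m n] cov U km by (metis image_mono order_trans)
        have conn': "connected (\<Union>i<m. sg s' i)"
          using connected_linear_image[OF linear_swp conn] U km by simp
        show False using core[OF cov' conn'] nm False n1 m1 by auto
      qed
    qed
    thus ?thesis using A gv by simp
  qed
qed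


lemma tree_edges: "geom_tree V E \<Longrightarrow> e \<in> E \<Longrightarrow> \<exists>a b. a \<noteq> b \<and> a \<in> V \<and> b \<in> V \<and> e = {a, b}"
  unfolding geom_tree_def by blast

lemma tree_finite: assumes "geom_tree V E" shows "finite E"
proof -
  have "E \<subseteq> Pow V" using tree_edges[OF assms] by blast
  moreover have "finite V" using assms unfolding geom_tree_def by blast
  ultimately show ?thesis by (metis finite_Pow_iff finite_subset)
qed

lemma tu_segments:
  assumes "geom_tree V E"
  shows "\<exists>k s. (\<Union>i<k. sg s i) = tree_union E"
proof -
  obtain h where h: "bij_betw h {..<card E} E"
    using ex_bij_betw_nat_finite[OF tree_finite[OF assms]] unfolding atLeast0LessThan by blast
  have "\<forall>e\<in>E. \<exists>p. e = {fst p, snd p}" using tree_edges[OF assms] by fastforce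
  from bchoice[OF this] obtain g where g: "\<forall>e\<in>E. e = {fst (g e), snd (g e)}" by blast
  define s where "s i = g (h i)" for i
  have eqi: "sg s i = edge_seg (h i)" if "i \<in> {..<card E}" for i
  proof -
    have "h i \<in> E" using h that unfolding bij_betw_def by auto
    hence "h i = {fst (s i), snd (s i)}" using g unfolding s_def by blast
    thus ?thesis unfolding sg_def by (simp add: edge_seg_pair)
  qed
  have "(\<Union>i<card E. sg s i) = (\<Union>i\<in>{..<card E}. edge_seg (h i))" by (rule SUP_cong[OF refl eqi])
  also have "\<dots> = (\<Union>e\<in>E. edge_seg e)"
  proof -
    have hE: "h ` {..<card E} = E" using h by (simp add: bij_betw_def)
    have "(\<Union>i\<in>{..<card E}. edge_seg (h i)) = \<Union> (edge_seg ` (h ` {..<card E}))"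
      by (simp add: image_image)
    thus ?thesis using hE by simp
  qed
  finally show ?thesis unfolding tree_union_def by blast
qed

lemma tu_connected:
  assumes T: "geom_tree V E"
  shows "connected (tree_union E)"
proof -
  let ?R = "{(x, y). adj E x y}"
  obtain e0 where e0: "e0 \<in> E" using T unfolding geom_tree_def by blast
  obtain a0 b0 where ab0: "a0 \<in> V" "e0 = {a0, b0}" using tree_edges[OF T e0] by blast
  have sub: "edge_seg e \<subseteq> tree_union E" if "e \<in> E" for e using that unfolding tree_union_def by blast
  have reach: "\<exists>C. connected C \<and> C \<subseteq> tree_union E \<and> a0 \<in> C \<and> v \<in> C" if "(a0, v) \<in> ?R\<^sup>*" for v
    using that
  proof (induction rule: rtrancl_induct)
    case base
    show ?case
      by (rule exI[of _ "edge_seg e0"]) (use sub[OF e0] ab0 in \<open>auto simp: edge_seg_pair\<close>)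
  next
    case (step y z)
    then obtain C where C: "connected C" "C \<subseteq> tree_union E" "a0 \<in> C" "y \<in> C" by blast
    have yz: "{y, z} \<in> E" using step(2) unfolding adj_def by simp
    have "connected (C \<union> closed_segment y z)" using C by (intro connected_Un) auto
    moreover have "closed_segment y z \<subseteq> tree_union E" using sub[OF yz] by (simp add: edge_seg_pair)
    ultimately show ?case using C by (intro exI[of _ "C \<union> closed_segment y z"]) auto
  qed
  have cg: "\<forall>a\<in>V. \<forall>b\<in>V. (a, b) \<in> ?R\<^sup>*" using T unfolding geom_tree_def connected_graph_def by blast
  have "\<forall>e\<in>E. \<exists>C. connected C \<and> C \<subseteq> tree_union E \<and> a0 \<in> C \<and> C \<inter> edge_seg e \<noteq> {}"
  proof
    fix e assume e: "e \<in> E"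
    obtain a b where ab: "a \<in> V" "e = {a, b}" using tree_edges[OF T e] by blast
    obtain C where C: "connected C" "C \<subseteq> tree_union E" "a0 \<in> C" "a \<in> C" using reach cg ab0(1) ab(1) by blast
    have "a \<in> edge_seg e" using ab by (simp add: edge_seg_pair)
    thus "\<exists>C. connected C \<and> C \<subseteq> tree_union E \<and> a0 \<in> C \<and> C \<inter> edge_seg e \<noteq> {}" using C by blast
  qed
  from bchoice[OF this] obtain Cf where Cf: "\<forall>e\<in>E. connected (Cf e) \<and> Cf e \<subseteq> tree_union E \<and> a0 \<in> Cf e \<and> Cf e \<inter> edge_seg e \<noteq> {}"
    by blast
  have eq: "tree_union E = \<Union>((\<lambda>e. Cf e \<union> edge_seg e) ` E)"
  proof (rule equalityI)
    show "tree_union E \<subseteq> \<Union>((\<lambda>e. Cf e \<union> edge_seg e) ` E)" unfolding tree_union_def by blast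
    show "\<Union>((\<lambda>e. Cf e \<union> edge_seg e) ` E) \<subseteq> tree_union E"
    proof (rule UN_least)
      fix e assume "e \<in> E"
      thus "Cf e \<union> edge_seg e \<subseteq> tree_union E" using Cf sub by blast
    qed
  qed
  have ce: "connected (edge_seg e)" if "e \<in> E" for e
    using tree_edges[OF T that] by (auto simp: edge_seg_pair)
  show ?thesis unfolding eq
  proof (rule connected_Union)
    fix S assume "S \<in> (\<lambda>e. Cf e \<union> edge_seg e) ` E"
    then obtain e where e: "e \<in> E" "S = Cf e \<union> edge_seg e" by blast
    have "connected (Cf e)" "Cf e \<inter> edge_seg e \<noteq> {}" using Cf e(1) by auto
    thus "connected S" using connected_Un[OF _ ce[OF e(1)]] e(2) by blast
  next
    show "\<Inter> ((\<lambda>e. Cf e \<union> edge_seg e) ` E) \<noteq> {}" using Cf e0 by blast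
  qed
qed

lemma ns_exists: assumes "geom_tree V E" shows "\<exists>s. (\<Union>i<num_segments E. sg s i) = tree_union E"
proof -
  have "\<exists>(k::nat) s. (\<Union>i<k. closed_segment (fst (s i)) (snd (s i))) = tree_union E"
    using tu_segments[OF assms] unfolding sg_def .
  from LeastI_ex[OF this] show ?thesis unfolding num_segments_def sg_def .
qed

lemma ns_le: "(\<Union>i<k. sg s i) = tree_union E \<Longrightarrow> num_segments E \<le> k"
  unfolding num_segments_def sg_def by (rule Least_le) (rule exI)

lemma part3:
  assumes "geom_tree V E" "covers E (grid n m)" "n \<ge> 1" "m \<ge> 1"
  shows "grid_value n m \<le> num_segments E"
proof -
  obtain s where s: "(\<Union>i<num_segments E. sg s i) = tree_union E" using ns_exists[OF assms(1)] by blast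
  have cov: "grid n m \<subseteq> (\<Union>i<num_segments E. sg s i)" using assms(2) s unfolding covers_def by simp
  have conn: "connected (\<Union>i<num_segments E. sg s i)" using tu_connected[OF assms(1)] s by simp
  show ?thesis by (rule LB[OF cov conn assms(3,4)])
qed


lemma single_tree: assumes "a \<noteq> b" shows "geom_tree {a, b} {{a, b}}"
proof -
  have conn: "connected_graph {a, b} {{a, b}}"
    unfolding connected_graph_def
  proof (intro ballI)
    fix x y assume "x \<in> {a, b}" "y \<in> {a, b}"
    have ab: "(a, b) \<in> {(x, y). adj {{a, b}} x y}" "(b, a) \<in> {(x, y). adj {{a, b}} x y}"
      unfolding adj_def by (auto simp: insert_commute)
    show "(x, y) \<in> {(x, y). adj {{a, b}} x y}\<^sup>*"
      using \<open>x \<in> {a, b}\<close> \<open>y \<in> {a, b}\<close> ab by auto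
  qed
  have nc: "\<nexists>vs. set vs \<subseteq> {a, b} \<and> is_cycle {{a, b}} vs"
  proof
    assume "\<exists>vs. set vs \<subseteq> {a, b} \<and> is_cycle {{a, b}} vs"
    then obtain vs where vs: "set vs \<subseteq> {a, b}" "is_cycle {{a, b}} vs" by blast
    have "length vs = card (set vs)" using vs(2) unfolding is_cycle_def by (simp add: distinct_card)
    also have "\<dots> \<le> card {a, b}" using vs(1) by (intro card_mono) auto
    also have "\<dots> \<le> 2" by (simp add: card_insert_le_m1)
    finally show False using vs(2) unfolding is_cycle_def by simp
  qed
  have ed: "\<forall>e\<in>{{a, b}}. \<exists>x y. x \<noteq> y \<and> x \<in> {a, b} \<and> y \<in> {a, b} \<and> e = {x, y}"
    using assms by blast
  have fin: "finite {a, b}" by simp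
  have ne: "{{a, b}} \<noteq> {}" by simp
  show ?thesis unfolding geom_tree_def by (intro conjI fin ne ed conn nc)
qed

lemma adj_new: assumes "a \<notin> V" "\<forall>e\<in>E. e \<subseteq> V" "adj (insert {a, b} E) a y \<or> adj (insert {a, b} E) y a"
  shows "y = b"
proof -
  have "{a, y} \<in> insert {a, b} E" using assms(3) unfolding adj_def by (auto simp: insert_commute)
  moreover have "{a, y} \<notin> E" using assms(1,2) by blast
  ultimately have "{a, y} = {a, b}" by blast
  thus ?thesis by (metis doubleton_eq_iff)
qed

lemma leaf_tree:
  assumes T: "geom_tree V E" and a: "a \<notin> V" and b: "b \<in> V"
  shows "geom_tree (insert a V) (insert {a, b} E)"
proof -
  let ?E = "insert {a, b} E"
  let ?R = "{(x, y). adj E x y}" and ?R' = "{(x, y). adj ?E x y}"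
  have EV: "\<forall>e\<in>E. e \<subseteq> V" using tree_edges[OF T] by blast
  have RR: "?R \<subseteq> ?R'" unfolding adj_def by auto
  have ab: "(a, b) \<in> ?R'" "(b, a) \<in> ?R'" unfolding adj_def by (auto simp: insert_commute)
  have cg: "\<forall>x\<in>V. \<forall>y\<in>V. (x, y) \<in> ?R\<^sup>*" using T unfolding geom_tree_def connected_graph_def by blast
  have cgV: "(x, y) \<in> ?R'\<^sup>*" if "x \<in> V" "y \<in> V" for x y
    using cg that rtrancl_mono[OF RR] by blast
  have conn: "connected_graph (insert a V) ?E"
    unfolding connected_graph_def
  proof (intro ballI)
    fix x y assume x: "x \<in> insert a V" and y: "y \<in> insert a V"
    have xa: "(x, a) \<in> ?R'\<^sup>*" if "x \<in> V" for x
      using rtrancl_into_rtrancl[OF cgV[OF that b] ab(2)] .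
    have ax: "(a, x) \<in> ?R'\<^sup>*" if "x \<in> V" for x
      using converse_rtrancl_into_rtrancl[OF ab(1) cgV[OF b that]] .
    show "(x, y) \<in> ?R'\<^sup>*"
    proof (cases "x = a")
      case True thus ?thesis using y ax[of y] by (cases "y = a") auto
    next
      case False
      hence xV: "x \<in> V" using x by simp
      show ?thesis using y xa[OF xV] cgV[OF xV] by (cases "y = a") auto
    qed
  qed
  have nc: "\<nexists>vs. set vs \<subseteq> insert a V \<and> is_cycle ?E vs"
  proof
    assume "\<exists>vs. set vs \<subseteq> insert a V \<and> is_cycle ?E vs"
    then obtain vs where vs: "set vs \<subseteq> insert a V" "is_cycle ?E vs" by blast
    have L: "length vs \<ge> 3" "distinct vs" and st: "\<And>i. Suc i < length vs \<Longrightarrow> adj ?E (vs ! i) (vs ! Suc i)"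
      and lh: "adj ?E (last vs) (hd vs)" using vs(2) unfolding is_cycle_def by auto
    have ne: "vs \<noteq> []" using L by auto
    have lh': "adj ?E (vs ! (length vs - 1)) (vs ! 0)" using lh ne by (simp add: last_conv_nth hd_conv_nth)
    show False
    proof (cases "a \<in> set vs")
      case False
      have "adj E x y" if "x \<in> set vs" "y \<in> set vs" "adj ?E x y" for x y
        using that False unfolding adj_def by (auto simp: doubleton_eq_iff)
      hence "is_cycle E vs" using vs(2) ne unfolding is_cycle_def
        by (metis last_in_set hd_in_set nth_mem Suc_lessD)
      moreover have "set vs \<subseteq> V" using vs(1) False by blast
      ultimately show False using T unfolding geom_tree_def by blast
    next
      case True
      then obtain p where p: "p < length vs" "vs ! p = a" by (metis in_set_conv_nth)
      define nx where "nx = (if p = length vs - 1 then 0 else Suc p)"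
      define pv where "pv = (if p = 0 then length vs - 1 else p - 1)"
      have "adj ?E a (vs ! nx)"
      proof (cases "p = length vs - 1")
        case True thus ?thesis using lh' p nx_def by simp
      next
        case False thus ?thesis using st[of p] p nx_def by simp
      qed
      hence bn: "vs ! nx = b" using adj_new[OF a EV] by blast
      have "adj ?E (vs ! pv) a"
      proof (cases "p = 0")
        case True thus ?thesis using lh' p pv_def by simp
      next
        case False thus ?thesis using st[of "p - 1"] p pv_def by simp
      qed
      hence bp: "vs ! pv = b" using adj_new[OF a EV] by blast
      have "nx < length vs" "pv < length vs" "nx \<noteq> pv" using p L unfolding nx_def pv_def by auto
      thus False using bn bp L(2) nth_eq_iff_index_eq by metis
    qed
  qed
  have fin: "finite (insert a V)" using T unfolding geom_tree_def by blast
  have ed: "\<forall>e\<in>?E. \<exists>x y. x \<noteq> y \<and> x \<in> insert a V \<and> y \<in> insert a V \<and> e = {x, y}"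
  proof
    fix e assume "e \<in> ?E"
    hence "e = {a, b} \<or> e \<in> E" by blast
    thus "\<exists>x y. x \<noteq> y \<and> x \<in> insert a V \<and> y \<in> insert a V \<and> e = {x, y}"
    proof
      assume e: "e = {a, b}"
      have "a \<noteq> b" using a b by blast
      thus ?thesis using e b by blast
    next
      assume "e \<in> E"
      then obtain x y where "x \<noteq> y" "x \<in> V" "y \<in> V" "e = {x, y}" using tree_edges[OF T] by blast
      thus ?thesis by blast
    qed
  qed
  have ne: "?E \<noteq> {}" by simp
  show ?thesis unfolding geom_tree_def by (intro conjI fin ne ed conn nc)
qed


definition P :: "bool \<Rightarrow> real \<Rightarrow> real \<Rightarrow> point" where
  "P sw x y = (if sw then (y, x) else (x, y))"

lemma P_swap: "P sw x y = P (\<not> sw) y x"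
  unfolding P_def by simp

lemma P_inj[simp]: "P sw x y = P sw x' y' \<longleftrightarrow> x = x' \<and> y = y'"
  unfolding P_def by auto

lemma segP:
  assumes "a \<le> c"
  shows "closed_segment (P sw a y) (P sw c y) = {P sw x y | x. a \<le> x \<and> x \<le> c}"
proof (cases sw)
  case True
  hence "closed_segment (P sw a y) (P sw c y) = {y} \<times> closed_segment a c"
    unfolding P_def by (simp add: closed_segment_same_fst)
  also have "\<dots> = {P sw x y | x. a \<le> x \<and> x \<le> c}"
    using assms True unfolding P_def by (auto simp: closed_segment_eq_real_ivl)
  finally show ?thesis .
next
  case False
  hence "closed_segment (P sw a y) (P sw c y) = closed_segment a c \<times> {y}"
    unfolding P_def by (simp add: closed_segment_same_snd)
  also have "\<dots> = {P sw x y | x. a \<le> x \<and> x \<le> c}"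
    using assms False unfolding P_def by (auto simp: closed_segment_eq_real_ivl)
  finally show ?thesis .
qed

lemma segP_v:
  assumes "a \<le> c"
  shows "closed_segment (P sw x a) (P sw x c) = {P sw x y | y. a \<le> y \<and> y \<le> c}"
  using segP[OF assms, of "\<not> sw" x] by (simp add: P_swap[of sw x])

definition combV :: "bool \<Rightarrow> real \<Rightarrow> nat \<Rightarrow> point set" where
  "combV sw L t = {P sw (real i) 0 | i. 1 \<le> i \<and> i \<le> t} \<union> {P sw (real i) L | i. 1 \<le> i \<and> i \<le> t}"

definition combE :: "bool \<Rightarrow> real \<Rightarrow> nat \<Rightarrow> point set set" where
  "combE sw L t = {{P sw (real i) 0, P sw (real (Suc i)) 0} | i. 1 \<le> i \<and> i < t}
     \<union> {{P sw (real i) 0, P sw (real i) L} | i. 1 \<le> i \<and> i \<le> t}"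

lemma combV_1: "combV sw L 1 = {P sw 1 0, P sw 1 L}"
  unfolding combV_def by (auto simp: le_antisym)

lemma combE_1: "combE sw L 1 = {{P sw 1 0, P sw 1 L}}"
  unfolding combE_def by (auto simp: le_antisym)

lemma combV_Suc: "t \<ge> 1 \<Longrightarrow> combV sw L (Suc t) =
    insert (P sw (real (Suc t)) L) (insert (P sw (real (Suc t)) 0) (combV sw L t))"
  unfolding combV_def by (auto simp: le_Suc_eq simp del: of_nat_Suc)

lemma combE_Suc: "t \<ge> 1 \<Longrightarrow> combE sw L (Suc t) =
    insert {P sw (real (Suc t)) L, P sw (real (Suc t)) 0}
      (insert {P sw (real (Suc t)) 0, P sw (real t) 0} (combE sw L t))"
  unfolding combE_def by (auto simp: le_Suc_eq less_Suc_eq insert_commute simp del: of_nat_Suc)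

lemma comb_tree:
  assumes L: "L \<noteq> 0" and t: "t \<ge> 1"
  shows "geom_tree (combV sw L t) (combE sw L t)"
  using t
proof (induction t rule: nat_induct_at_least)
  case base
  show ?case unfolding combV_1 combE_1 by (rule single_tree) (use L in simp)
next
  case (Suc t)
  have n1: "P sw (real (Suc t)) 0 \<notin> combV sw L t" using L unfolding combV_def by auto
  have b1: "P sw (real t) 0 \<in> combV sw L t" using Suc(1) unfolding combV_def by auto
  have T1: "geom_tree (insert (P sw (real (Suc t)) 0) (combV sw L t))
      (insert {P sw (real (Suc t)) 0, P sw (real t) 0} (combE sw L t))"
    by (rule leaf_tree[OF Suc(2) n1 b1])
  have n2: "P sw (real (Suc t)) L \<notin> insert (P sw (real (Suc t)) 0) (combV sw L t)"
    using L unfolding combV_def by auto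
  show ?case unfolding combV_Suc[OF Suc(1)] combE_Suc[OF Suc(1)]
    by (rule leaf_tree[OF T1 n2]) simp
qed


lemma seg_spine: "edge_seg {P sw (real i) 0, P sw (real (Suc i)) 0} = {P sw x 0 | x. real i \<le> x \<and> x \<le> real (Suc i)}"
  unfolding edge_seg_pair by (rule segP) simp

lemma seg_tooth: "L \<ge> 0 \<Longrightarrow> edge_seg {P sw (real i) 0, P sw (real i) L} = {P sw (real i) y | y. 0 \<le> y \<and> y \<le> L}"
  unfolding edge_seg_pair by (rule segP_v)

lemma SS:
  assumes "i \<noteq> j" "x \<in> edge_seg {P sw (real i) 0, P sw (real (Suc i)) 0}"
    "x \<in> edge_seg {P sw (real j) 0, P sw (real (Suc j)) 0}"
  shows "x \<in> {P sw (real i) 0, P sw (real (Suc i)) 0} \<inter> {P sw (real j) 0, P sw (real (Suc j)) 0}"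
proof -
  obtain x1 where x1: "x = P sw x1 0" "real i \<le> x1" "x1 \<le> real (Suc i)" using assms(2) unfolding seg_spine by blast
  obtain x2 where x2: "x = P sw x2 0" "real j \<le> x2" "x2 \<le> real (Suc j)" using assms(3) unfolding seg_spine by blast
  have e: "x1 = x2" using x1(1) x2(1) by simp
  consider "i < j" | "j < i" using assms(1) by linarith
  thus ?thesis
  proof cases
    case 1
    hence "Suc i \<le> j" by simp
    hence "real (Suc i) \<le> real j" by (simp only: of_nat_le_iff)
    hence "x1 = real (Suc i)" "x1 = real j" using x1 x2 e by linarith+
    thus ?thesis using x1(1) by simp
  next
    case 2
    hence "Suc j \<le> i" by simp
    hence "real (Suc j) \<le> real i" by (simp only: of_nat_le_iff)
    hence "x1 = real (Suc j)" "x1 = real i" using x1 x2 e by linarith+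
    thus ?thesis using x1(1) by simp
  qed
qed

lemma TT:
  assumes "L \<ge> 0" "i \<noteq> j" "x \<in> edge_seg {P sw (real i) 0, P sw (real i) L}"
    "x \<in> edge_seg {P sw (real j) 0, P sw (real j) L}"
  shows False
proof -
  obtain y1 where "x = P sw (real i) y1" using assms(3) unfolding seg_tooth[OF assms(1)] by blast
  moreover obtain y2 where "x = P sw (real j) y2" using assms(4) unfolding seg_tooth[OF assms(1)] by blast
  ultimately show False using assms(2) by simp
qed

lemma ST:
  assumes "L \<ge> 0" "x \<in> edge_seg {P sw (real i) 0, P sw (real (Suc i)) 0}"
    "x \<in> edge_seg {P sw (real j) 0, P sw (real j) L}"
  shows "x \<in> {P sw (real i) 0, P sw (real (Suc i)) 0} \<inter> {P sw (real j) 0, P sw (real j) L}"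
proof -
  obtain x1 where x1: "x = P sw x1 0" "real i \<le> x1" "x1 \<le> real (Suc i)" using assms(2) unfolding seg_spine by blast
  obtain y where y: "x = P sw (real j) y" using assms(3) unfolding seg_tooth[OF assms(1)] by blast
  have e: "x1 = real j" "y = 0" using x1(1) y by simp_all
  have "i \<le> j" "j \<le> Suc i" using x1(2,3) e(1) by (simp_all only: of_nat_le_iff)
  hence "j = i \<or> j = Suc i" by linarith
  thus ?thesis using x1(1) e by auto
qed

lemma comb_cases:
  "e \<in> combE sw L t \<Longrightarrow> (\<exists>i. e = {P sw (real i) 0, P sw (real (Suc i)) 0}) \<or> (\<exists>i. e = {P sw (real i) 0, P sw (real i) L})"
  unfolding combE_def by blast

lemma comb_noncrossing:
  assumes L: "L > 0"
  shows "noncrossing (combE sw L t)"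
  unfolding noncrossing_def
proof (intro ballI impI subsetI)
  fix e f x assume e: "e \<in> combE sw L t" and f: "f \<in> combE sw L t" and ne: "e \<noteq> f"
    and x: "x \<in> edge_seg e \<inter> edge_seg f"
  have L0: "L \<ge> 0" using L by simp
  have L1: "P sw r 0 \<noteq> P sw r L" for r using L by simp
  show "x \<in> e \<inter> f"
    using comb_cases[OF e]
  proof
    assume "\<exists>i. e = {P sw (real i) 0, P sw (real (Suc i)) 0}"
    then obtain i where i: "e = {P sw (real i) 0, P sw (real (Suc i)) 0}" by blast
    show ?thesis using comb_cases[OF f]
    proof
      assume "\<exists>j. f = {P sw (real j) 0, P sw (real (Suc j)) 0}"
      then obtain j where j: "f = {P sw (real j) 0, P sw (real (Suc j)) 0}" by blast
      have "i \<noteq> j" using i j ne by blast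
      thus ?thesis using SS[of i j x sw] x i j by blast
    next
      assume "\<exists>j. f = {P sw (real j) 0, P sw (real j) L}"
      then obtain j where j: "f = {P sw (real j) 0, P sw (real j) L}" by blast
      thus ?thesis using ST[OF L0, of x sw i j] x i j by blast
    qed
  next
    assume "\<exists>i. e = {P sw (real i) 0, P sw (real i) L}"
    then obtain i where i: "e = {P sw (real i) 0, P sw (real i) L}" by blast
    show ?thesis using comb_cases[OF f]
    proof
      assume "\<exists>j. f = {P sw (real j) 0, P sw (real (Suc j)) 0}"
      then obtain j where j: "f = {P sw (real j) 0, P sw (real (Suc j)) 0}" by blast
      thus ?thesis using ST[OF L0, of x sw j i] x i j by blast
    next
      assume "\<exists>j. f = {P sw (real j) 0, P sw (real j) L}"
      then obtain j where j: "f = {P sw (real j) 0, P sw (real j) L}" by blast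
      have "i \<noteq> j" using i j ne by blast
      thus ?thesis using TT[OF L0 _, of i j x sw] x i j by blast
    qed
  qed
qed


lemma TU_insert: "tree_union (insert e E) = edge_seg e \<union> tree_union E"
  unfolding tree_union_def by simp

lemma TU_comb:
  assumes L: "L \<ge> 0" and t: "t \<ge> 1"
  shows "tree_union (combE sw L t) = {P sw x 0 | x. 1 \<le> x \<and> x \<le> real t}
     \<union> {P sw (real i) y | i y. 1 \<le> i \<and> i \<le> t \<and> 0 \<le> y \<and> y \<le> L}"
  using t
proof (induction t rule: nat_induct_at_least)
  case base
  have "tree_union (combE sw L 1) = {P sw (real 1) y | y. 0 \<le> y \<and> y \<le> L}"
    unfolding combE_1 tree_union_def using seg_tooth[OF L, of sw 1] by simp
  also have "\<dots> = {P sw x 0 | x. 1 \<le> x \<and> x \<le> real 1}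
     \<union> {P sw (real i) y | i y. 1 \<le> i \<and> i \<le> 1 \<and> 0 \<le> y \<and> y \<le> L}"
  proof (rule set_eqI)
    fix p
    show "p \<in> {P sw (real 1) y | y. 0 \<le> y \<and> y \<le> L} \<longleftrightarrow> p \<in> {P sw x 0 | x. 1 \<le> x \<and> x \<le> real 1}
     \<union> {P sw (real i) y | i y. 1 \<le> i \<and> i \<le> 1 \<and> 0 \<le> y \<and> y \<le> L}"
    proof
      assume "p \<in> {P sw (real 1) y | y. 0 \<le> y \<and> y \<le> L}"
      then obtain y where "p = P sw (real 1) y" "0 \<le> y" "y \<le> L" by blast
      thus "p \<in> {P sw x 0 | x. 1 \<le> x \<and> x \<le> real 1}
        \<union> {P sw (real i) y | i y. 1 \<le> i \<and> i \<le> 1 \<and> 0 \<le> y \<and> y \<le> L}" by blast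
    next
      assume "p \<in> {P sw x 0 | x. 1 \<le> x \<and> x \<le> real 1}
        \<union> {P sw (real i) y | i y. 1 \<le> i \<and> i \<le> 1 \<and> 0 \<le> y \<and> y \<le> L}"
      thus "p \<in> {P sw (real 1) y | y. 0 \<le> y \<and> y \<le> L}"
      proof
        assume "p \<in> {P sw x 0 | x. 1 \<le> x \<and> x \<le> real 1}"
        then obtain x where "p = P sw x 0" "1 \<le> x" "x \<le> real 1" by blast
        hence "p = P sw (real 1) 0" by simp
        thus ?thesis using L by blast
      next
        assume "p \<in> {P sw (real i) y | i y. 1 \<le> i \<and> i \<le> 1 \<and> 0 \<le> y \<and> y \<le> L}"
        then obtain i y where "p = P sw (real i) y" "1 \<le> i" "i \<le> 1" "0 \<le> y" "y \<le> L" by blast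
        moreover hence "i = 1" by simp
        ultimately show ?thesis by blast
      qed
    qed
  qed
  finally show ?case .
next
  case (Suc t)
  let ?SP = "\<lambda>t. {P sw x 0 | x. 1 \<le> x \<and> x \<le> real t}"
  let ?TE = "\<lambda>t. {P sw (real i) y | i y. 1 \<le> i \<and> i \<le> t \<and> 0 \<le> y \<and> y \<le> L}"
  let ?T = "{P sw (real (Suc t)) y | y. 0 \<le> y \<and> y \<le> L}"
  let ?S = "{P sw x 0 | x. real t \<le> x \<and> x \<le> real (Suc t)}"
  have e1: "edge_seg {P sw (real (Suc t)) L, P sw (real (Suc t)) 0} = ?T"
    by (subst insert_commute) (rule seg_tooth[OF L])
  have e2: "edge_seg {P sw (real (Suc t)) 0, P sw (real t) 0} = ?S"
    by (subst insert_commute) (rule seg_spine)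
  have c1: "tree_union (combE sw L (Suc t)) = ?T \<union> ?S \<union> tree_union (combE sw L t)"
    unfolding combE_Suc[OF Suc(1)] TU_insert e1 e2 by (simp only: Un_assoc)
  have c3: "?SP (Suc t) = ?SP t \<union> ?S"
  proof (rule set_eqI, rule iffI)
    fix p assume "p \<in> ?SP (Suc t)"
    then obtain x where x: "p = P sw x 0" "1 \<le> x" "x \<le> real (Suc t)" by blast
    show "p \<in> ?SP t \<union> ?S"
    proof (cases "x \<le> real t")
      case True thus ?thesis using x by blast
    next
      case False thus ?thesis using x by force
    qed
  next
    fix p assume "p \<in> ?SP t \<union> ?S"
    thus "p \<in> ?SP (Suc t)"
    proof
      assume "p \<in> ?SP t"
      then obtain x where x: "p = P sw x 0" "1 \<le> x" "x \<le> real t" by blast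
      have "x \<le> real (Suc t)" using x(3) by simp
      thus ?thesis using x by blast
    next
      assume "p \<in> ?S"
      then obtain x where x: "p = P sw x 0" "real t \<le> x" "x \<le> real (Suc t)" by blast
      have "(1::real) \<le> real t" using Suc(1) by simp
      hence "1 \<le> x" using x(2) by linarith
      thus ?thesis using x by blast
    qed
  qed
  have c4: "?TE (Suc t) = ?TE t \<union> ?T"
  proof (rule set_eqI, rule iffI)
    fix p assume "p \<in> ?TE (Suc t)"
    then obtain i y where iy: "p = P sw (real i) y" "1 \<le> i" "i \<le> Suc t" "0 \<le> y" "y \<le> L" by blast
    show "p \<in> ?TE t \<union> ?T"
    proof (cases "i \<le> t")
      case True thus ?thesis using iy by blast
    next
      case False hence "i = Suc t" using iy by simp
      thus ?thesis using iy by blast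
    qed
  next
    fix p assume "p \<in> ?TE t \<union> ?T"
    thus "p \<in> ?TE (Suc t)"
    proof
      assume "p \<in> ?TE t"
      then obtain i y where iy: "p = P sw (real i) y" "1 \<le> i" "i \<le> t" "0 \<le> y" "y \<le> L" by blast
      have "i \<le> Suc t" using iy(3) by simp
      thus ?thesis using iy by blast
    next
      assume "p \<in> ?T"
      then obtain y where "p = P sw (real (Suc t)) y" "0 \<le> y" "y \<le> L" by blast
      moreover have "1 \<le> Suc t" by simp
      ultimately show ?thesis by blast
    qed
  qed
  show ?case unfolding c1 Suc(2) c3 c4 by (simp add: Un_ac)
qed


lemma comb_ns:
  assumes L: "L \<ge> 0" and t: "t \<ge> 1"
  shows "num_segments (combE sw L t) \<le> Suc t"
proof -
  define s where "s i = (if i = 0 then (P sw 1 0, P sw (real t) 0) else (P sw (real i) 0, P sw (real i) L))" for i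
  let ?SP = "{P sw x 0 | x. 1 \<le> x \<and> x \<le> real t}"
  let ?TE = "{P sw (real i) y | i y. 1 \<le> i \<and> i \<le> t \<and> 0 \<le> y \<and> y \<le> L}"
  have s0: "sg s 0 = ?SP" unfolding sg_def s_def using segP[of 1 "real t" sw 0] t by simp
  have si: "sg s i = {P sw (real i) y | y. 0 \<le> y \<and> y \<le> L}" if "i \<noteq> 0" for i
    unfolding sg_def s_def using that segP_v[OF L, of sw "real i"] by simp
  have "(\<Union>i<Suc t. sg s i) = ?SP \<union> ?TE"
  proof (rule set_eqI, rule iffI)
    fix p assume "p \<in> (\<Union>i<Suc t. sg s i)"
    then obtain i where i: "i < Suc t" "p \<in> sg s i" by blast
    show "p \<in> ?SP \<union> ?TE"
    proof (cases "i = 0")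
      case True thus ?thesis using i s0 by simp
    next
      case False
      then obtain y where "p = P sw (real i) y" "0 \<le> y" "y \<le> L" using i(2) si by blast
      moreover have "1 \<le> i" "i \<le> t" using False i(1) by auto
      ultimately show ?thesis by blast
    qed
  next
    fix p assume "p \<in> ?SP \<union> ?TE"
    thus "p \<in> (\<Union>i<Suc t. sg s i)"
    proof
      assume "p \<in> ?SP" thus ?thesis using s0 by blast
    next
      assume "p \<in> ?TE"
      then obtain i y where iy: "p = P sw (real i) y" "1 \<le> i" "i \<le> t" "0 \<le> y" "y \<le> L" by blast
      have "p \<in> sg s i" using si[of i] iy by auto
      moreover have "i < Suc t" using iy by simp
      ultimately show ?thesis by blast
    qed
  qed
  thus ?thesis using TU_comb[OF L t, of sw] ns_le by metis
qed

lemma comb_cover: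
  assumes L: "L \<ge> 0" and t: "t \<ge> 1" and a: "1 \<le> a" "a \<le> t" and b: "0 \<le> b" "b \<le> L"
  shows "P sw (real a) b \<in> tree_union (combE sw L t)"
  unfolding TU_comb[OF L t] using a b by blast

definition c0 :: point where "c0 = (3/2, 3/2)"

definition starE :: "point set set" where
  "starE = insert {(2,1), c0} (insert {(1,2), c0} (insert {(2,2), c0} {{(1,1), c0}}))"

definition starV :: "point set" where
  "starV = insert (2,1) (insert (1,2) (insert (2,2) {(1,1), c0}))"

lemma star_tree: "geom_tree starV starE"
proof -
  have T0: "geom_tree {(1,1), c0} {{(1,1), c0}}" by (rule single_tree) (simp add: c0_def)
  have T1: "geom_tree (insert (2,2) {(1,1), c0}) (insert {(2,2), c0} {{(1,1), c0}})"
    by (rule leaf_tree[OF T0]) (simp_all add: c0_def)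
  have T2: "geom_tree (insert (1,2) (insert (2,2) {(1,1), c0})) (insert {(1,2), c0} (insert {(2,2), c0} {{(1,1), c0}}))"
    by (rule leaf_tree[OF T1]) (simp_all add: c0_def)
  show ?thesis unfolding starV_def starE_def
    by (rule leaf_tree[OF T2]) (simp_all add: c0_def)
qed

lemma star_meet:
  assumes p: "p \<in> {(1,1), (2,2), (1,2), (2,1)}" and q: "q \<in> {(1,1), (2,2), (1,2), (2,1)}"
    and pq: "p \<noteq> q" and x: "x \<in> closed_segment p c0" "x \<in> closed_segment q c0"
  shows "x = c0"
proof -
  obtain u where u: "0 \<le> u" "u \<le> 1" "fst x = (1-u) * fst p + u * fst c0" "snd x = (1-u) * snd p + u * snd c0"
    using seg_in[OF x(1)] by blast
  obtain v where v: "0 \<le> v" "v \<le> 1" "fst x = (1-v) * fst q + v * fst c0" "snd x = (1-v) * snd q + v * snd c0"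
    using seg_in[OF x(2)] by blast
  have "fst x = 3/2 \<and> snd x = 3/2" using p q pq u v unfolding c0_def by auto
  thus ?thesis unfolding c0_def by (simp add: prod_eq_iff)
qed

lemma star_noncrossing: "noncrossing starE"
  unfolding noncrossing_def
proof (intro ballI impI subsetI)
  fix e f x assume e: "e \<in> starE" and f: "f \<in> starE" and ne: "e \<noteq> f" and x: "x \<in> edge_seg e \<inter> edge_seg f"
  obtain p where p: "p \<in> {(1,1), (2,2), (1,2), (2,1)}" "e = {p, c0}" using e unfolding starE_def by blast
  obtain q where q: "q \<in> {(1,1), (2,2), (1,2), (2,1)}" "f = {q, c0}" using f unfolding starE_def by blast
  have "p \<noteq> q" using ne p q by blast
  hence "x = c0" using star_meet[OF p(1) q(1)] x p(2) q(2) by (simp add: edge_seg_pair)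
  thus "x \<in> e \<inter> f" using p q by simp
qed

lemma c0_mid: "c0 \<in> closed_segment (1,1) (2,2)" "c0 \<in> closed_segment (1,2) (2,1)"
  unfolding closed_segment_def c0_def
  by (rule CollectI, rule exI[of _ "1/2"], simp add: scaleR_prod_def)+

lemma star_ns: "num_segments starE \<le> 2"
proof -
  define s :: "nat \<Rightarrow> point \<times> point" where "s i = (if i = 0 then ((1,1), (2,2)) else ((1,2), (2,1)))" for i
  have "(\<Union>i<2. sg s i) = sg s 0 \<union> sg s 1" by (auto simp: lessThan_def less_Suc_eq numeral_2_eq_2)
  also have "\<dots> = closed_segment (1,1) (2,2) \<union> closed_segment (1,2) (2,1)" unfolding sg_def s_def by simp
  also have "\<dots> = tree_union starE"
  proof -
    have "closed_segment (1,1) (2,2) = closed_segment (1,1) c0 \<union> closed_segment (2,2) c0"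
      using Un_closed_segment[OF c0_mid(1)] by (simp add: closed_segment_commute)
    moreover have "closed_segment (1,2) (2,1) = closed_segment (1,2) c0 \<union> closed_segment (2,1) c0"
      using Un_closed_segment[OF c0_mid(2)] by (simp add: closed_segment_commute)
    moreover have "tree_union starE = closed_segment (2,1) c0 \<union> closed_segment (1,2) c0 \<union> closed_segment (2,2) c0 \<union> closed_segment (1,1) c0"
      unfolding starE_def tree_union_def by (simp add: edge_seg_pair Un_ac)
    ultimately show ?thesis by (simp add: Un_ac)
  qed
  finally show ?thesis by (rule ns_le)
qed

lemma star_cover: "covers starE (grid 2 2)"
  unfolding covers_def
proof
  fix p assume "p \<in> grid 2 2"
  then obtain i j :: nat where ij: "p = (real i, real j)" "1 \<le> i" "i \<le> 2" "1 \<le> j" "j \<le> 2"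
    unfolding grid_def by blast
  hence "i = 1 \<or> i = 2" "j = 1 \<or> j = 2" by auto
  hence "p \<in> {(1,1), (2,2), (1,2), (2,1)}" using ij(1) by auto
  then obtain e where "e \<in> starE" "p \<in> e" unfolding starE_def by blast
  moreover have "e \<subseteq> edge_seg e" for e unfolding edge_seg_def using ends_in_segment(1) by fastforce
  ultimately show "p \<in> tree_union starE" unfolding tree_union_def by blast
qed


lemma comb_grid_cover:
  assumes n1: "n \<ge> 1" and m1: "m \<ge> 1"
    and sw: "sw = (m < n)" and t: "t = min n m" and L: "L = real (max n m)"
  shows "covers (combE sw L t) (grid n m)"
  unfolding covers_def
proof
  fix p assume "p \<in> grid n m"
  then obtain i j :: nat where ij: "p = (real i, real j)" "1 \<le> i" "i \<le> n" "1 \<le> j" "j \<le> m"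
    unfolding grid_def by blast
  have L0: "L \<ge> 0" using L by simp
  have t1: "t \<ge> 1" using t n1 m1 by simp
  show "p \<in> tree_union (combE sw L t)"
  proof (cases "m < n")
    case True
    hence "p = P sw (real j) (real i)" using ij sw unfolding P_def by simp
    moreover have "j \<le> t" "real i \<le> L" using True ij t L by auto
    ultimately show ?thesis using comb_cover[OF L0 t1 ij(4)] by simp
  next
    case False
    hence "p = P sw (real i) (real j)" using ij sw unfolding P_def by simp
    moreover have "i \<le> t" "real j \<le> L" using False ij t L by auto
    ultimately show ?thesis using comb_cover[OF L0 t1 ij(2)] by simp
  qed
qed

lemma construction:
  assumes n1: "n \<ge> 1" and m1: "m \<ge> 1"
  shows "\<exists>V E. geom_tree V E \<and> noncrossing E \<and> covers E (grid n m) \<and> num_segments E \<le> grid_value n m"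
proof (cases "n = 1 \<or> m = 1")
  case True
  define sw where "sw = (m < n)"
  define L where "L = real (max n m)"
  have L0: "L > 0" using L_def n1 by simp
  have gv: "grid_value n m = 1" using True n1 m1 unfolding grid_value_def by auto
  have t: "min n m = 1" using True n1 m1 by auto
  have T: "geom_tree (combV sw L 1) (combE sw L 1)" by (rule comb_tree) (use L0 in auto)
  have N: "noncrossing (combE sw L 1)" by (rule comb_noncrossing[OF L0])
  have C: "covers (combE sw L 1) (grid n m)" using comb_grid_cover[OF n1 m1 sw_def _ L_def] t by simp
  define s :: "nat \<Rightarrow> point \<times> point" where "s i = (P sw 1 0, P sw 1 L)" for i
  have "(\<Union>i<1. sg s i) = tree_union (combE sw L 1)"
    unfolding combE_1 tree_union_def sg_def s_def by (simp add: edge_seg_pair lessThan_Suc)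
  hence "num_segments (combE sw L 1) \<le> 1" by (rule ns_le)
  thus ?thesis using T N C gv by metis
next
  case False
  show ?thesis
  proof (cases "n = 2 \<and> m = 2")
    case True
    have gv: "grid_value n m = 2" using True unfolding grid_value_def by simp
    show ?thesis using star_tree star_noncrossing star_cover star_ns True gv by metis
  next
    case False2: False
    define sw where "sw = (m < n)"
    define L where "L = real (max n m)"
    define t where "t = min n m"
    have L0: "L > 0" using L_def n1 by simp
    have t1: "t \<ge> 1" using t_def n1 m1 by simp
    have gv: "grid_value n m = Suc t" using False False2 unfolding grid_value_def t_def by simp
    have T: "geom_tree (combV sw L t) (combE sw L t)" by (rule comb_tree) (use L0 t1 in auto)
    have N: "noncrossing (combE sw L t)" by (rule comb_noncrossing[OF L0])
    have C: "covers (combE sw L t) (grid n m)" by (rule comb_grid_cover[OF n1 m1 sw_def t_def L_def])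
    have "num_segments (combE sw L t) \<le> Suc t" by (rule comb_ns) (use L0 t1 in auto)
    thus ?thesis using T N C gv by metis
  qed
qed

theorem claim5:
  fixes n m :: nat
  assumes "n \<ge> 1" and "m \<ge> 1"
  shows "(\<exists>V E. geom_tree V E \<and> covers E (grid n m) \<and>
            num_segments E = grid_value n m)
       \<and> (\<exists>V E. geom_tree V E \<and> noncrossing E \<and> covers E (grid n m) \<and>
            num_segments E = grid_value n m)
       \<and> (\<forall>V E. geom_tree V E \<and> covers E (grid n m) \<longrightarrow>
            num_segments E \<ge> grid_value n m)"
proof -
  obtain V E where VE: "geom_tree V E" "noncrossing E" "covers E (grid n m)" "num_segments E \<le> grid_value n m"
    using construction[OF assms] by blast
  have eq: "num_segments E = grid_value n m" using VE part3[OF VE(1) VE(3) assms] by simp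
  have 3: "\<forall>V E. geom_tree V E \<and> covers E (grid n m) \<longrightarrow> num_segments E \<ge> grid_value n m"
    using part3[OF _ _ assms] by blast
  show ?thesis using VE eq 3 by blast
qed

end
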